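(* Let $\alpha$ be an involution of $Y$ which interchanges $E_1'\leftrightarrow R_3$, $E_2'\leftrightarrow R_1$, $E_3'\leftrightarrow R_2$ and permutes the six $A_2$-configurations $R_{i1}-R_{i2}$ in three orbits. Then the class of $\alpha(C_1')$ in $\mathrm{Pic}(Y)$ is either $C_1'$ or $-R_3-E_1'+3(E_3'+R_2)-C_1'$.
   Context: $Y$ is the minimal resolution of the quotient of the Cartwright–Steger surface $X$ by its automorphism group $\mathrm{Aut}(X)\cong\mathbb{Z}/3$; $Y$ is a simply connected minimal surface of general type with $K_Y^2=2$, $p_g=1$, $\mathrm{rk}\,\mathrm{Pic}(Y)=18$, so numerical and linear equivalence coincide on $Y$. $R_1,R_2,R_3$ are the three $(-3)$-curves of the resolution over the images of the fixed points of type $\frac13(1,1)$, $R_{j1}-R_{j2}$ ($j=1,\dots,6$) the $A_2$-chains of $(-2)$-curves over the images of the fixed points of type $\frac13(1,2)$, and $E_1',E_2',E_3',C_1',\dots,C_4'$ are the proper transforms of the images of certain totally geodesic curves. The $R_{lm}$ are disjoint from $E_i',R_j,C_k'$, and $\mathrm{Pic}(Y)\otimes\mathbb{Q}$ is spanned by $E_1',E_3',R_1,R_2,R_3,C_1'$ and the $R_{ij}$. The intersection matrix in the order $E_1',E_2',E_3',R_1,R_2,R_3,C_1'$ is $$\begin{pmatrix}-3&0&0&3&1&2&2\\0&-3&0&2&1&3&0\\0&0&-3&1&4&1&1\\3&2&1&-3&0&0&0\\1&1&4&0&-3&0&1\\2&3&1&0&0&-3&2\\2&0&1&0&1&2&-2\end{pmatrix}.$$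 $K_Y\equiv E_3'+R_2$ and $E_1'+E_2'+R_1+R_3\equiv 2E_3'+2R_2$. *)

theory Defs
  imports "HOL-Analysis.Analysis"
begin

text \<open>Intersection matrix of the curves E1', E2', E3', R1, R2, R3, C1' (in this order)
  on the surface Y, as given in the paper.\<close>
definition intersection_matrix :: "int list list" where
  "intersection_matrix =
    [[-3, 0, 0, 3, 1, 2, 2],
     [ 0,-3, 0, 2, 1, 3, 0],
     [ 0, 0,-3, 1, 4, 1, 1],
     [ 3, 2, 1,-3, 0, 0, 0],
     [ 1, 1, 4, 0,-3, 0, 1],
     [ 2, 3, 1, 0, 0,-3, 2],
     [ 2, 0, 1, 0, 1, 2,-2]]"

definition seven_classes :: "(nat \<Rightarrow> 'v) \<Rightarrow> (nat \<Rightarrow> 'v) \<Rightarrow> 'v \<Rightarrow> 'v list" where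
  "seven_classes E R C1 = [E 1, E 2, E 3, R 1, R 2, R 3, C1]"

end

theory Submission
  imports Defs
begin

theorem lemma5p2:
  fixes B :: "'v::real_vector \<Rightarrow> 'v \<Rightarrow> real"
    and E R :: "nat \<Rightarrow> 'v"
    and Rc :: "nat \<Rightarrow> nat \<Rightarrow> 'v"
    and C1 :: 'v
    and K :: 'v
    and \<alpha> :: "'v \<Rightarrow> 'v"
  assumes bil: "bilinear B"
    and sym: "\<And>x y. B x y = B y x"
    and nondeg: "\<And>x. (\<forall>y. B x y = 0) \<Longrightarrow> x = 0"
    and rank: "dim (UNIV :: 'v set) = 18"
    and spans: "span ({E 1, E 3, R 1, R 2, R 3, C1} \<union> {Rc i j | i j. i \<in> {1..6} \<and> j \<in> {1,2}}) = UNIV"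
    and matrix: "\<And>i j. i < 7 \<Longrightarrow> j < 7 \<Longrightarrow>
        B (seven_classes E R C1 ! i) (seven_classes E R C1 ! j) = of_int (intersection_matrix ! i ! j)"
    and A2_self: "\<And>i j. i \<in> {1..6} \<Longrightarrow> j \<in> {1,2} \<Longrightarrow> B (Rc i j) (Rc i j) = -2"
    and A2_chain: "\<And>i. i \<in> {1..6} \<Longrightarrow> B (Rc i 1) (Rc i 2) = 1"
    and A2_disj: "\<And>i j l m. i \<in> {1..6} \<Longrightarrow> l \<in> {1..6} \<Longrightarrow> j \<in> {1,2} \<Longrightarrow> m \<in> {1,2} \<Longrightarrow>
        i \<noteq> l \<Longrightarrow> B (Rc i j) (Rc l m) = 0"
    and A2_orth: "\<And>i j k. i \<in> {1..6} \<Longrightarrow> j \<in> {1,2} \<Longrightarrow> k \<in> {1,2,3} \<Longrightarrow>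
        B (Rc i j) (E k) = 0 \<and> B (Rc i j) (R k) = 0"
    and A2_orth_C: "\<And>i j. i \<in> {1..6} \<Longrightarrow> j \<in> {1,2} \<Longrightarrow> B (Rc i j) C1 = 0"
    and canonical: "K = E 3 + R 2"
    and relation: "E 1 + E 2 + R 1 + R 3 = 2 *\<^sub>R (E 3 + R 2)"
    and \<alpha>_lin: "linear \<alpha>"
    and \<alpha>_isom: "\<And>x y. B (\<alpha> x) (\<alpha> y) = B x y"
    and \<alpha>_invol: "\<And>x. \<alpha> (\<alpha> x) = x"
    and \<alpha>_E1: "\<alpha> (E 1) = R 3" and \<alpha>_R3: "\<alpha> (R 3) = E 1"
    and \<alpha>_E2: "\<alpha> (E 2) = R 1" and \<alpha>_R1: "\<alpha> (R 1) = E 2"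
    and \<alpha>_E3: "\<alpha> (E 3) = R 2" and \<alpha>_R2: "\<alpha> (R 2) = E 3"
    and \<alpha>_A2: "\<exists>\<sigma>. \<sigma> permutes {1..6::nat} \<and>
        (\<forall>i\<in>{1..6}. \<sigma> (\<sigma> i) = i \<and> \<sigma> i \<noteq> i \<and>
          ((\<alpha> (Rc i 1) = Rc (\<sigma> i) 1 \<and> \<alpha> (Rc i 2) = Rc (\<sigma> i) 2) \<or>
           (\<alpha> (Rc i 1) = Rc (\<sigma> i) 2 \<and> \<alpha> (Rc i 2) = Rc (\<sigma> i) 1)))"
  shows "\<alpha> C1 = C1 \<or> \<alpha> C1 = - R 3 - E 1 + 3 *\<^sub>R (E 3 + R 2) - C1"

proof -
  have bl: "linear (B z)" for z using bil unfolding bilinear_def by blast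
  have br: "linear (\<lambda>x. B x z)" for z using bil unfolding bilinear_def by blast
  note bsimps = bilinear_ladd[OF bil] bilinear_radd[OF bil] bilinear_lmul[OF bil] bilinear_rmul[OF bil]
     bilinear_lsub[OF bil] bilinear_rsub[OF bil] bilinear_lneg[OF bil] bilinear_rneg[OF bil]
  have m00: "B (E 1) (E 1) = -3" using matrix[of 0 0] by (simp add: seven_classes_def intersection_matrix_def)
  have n00: "B (E (Suc 0)) (E (Suc 0)) = -3" using m00 by simp
  have m01: "B (E 1) (E 2) = 0" using matrix[of 0 1] by (simp add: seven_classes_def intersection_matrix_def)
  have n01: "B (E (Suc 0)) (E 2) = 0" using m01 by simp
  have m02: "B (E 1) (E 3) = 0" using matrix[of 0 2] by (simp add: seven_classes_def intersection_matrix_def)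
  have n02: "B (E (Suc 0)) (E 3) = 0" using m02 by simp
  have m03: "B (E 1) (R 1) = 3" using matrix[of 0 3] by (simp add: seven_classes_def intersection_matrix_def)
  have n03: "B (E (Suc 0)) (R (Suc 0)) = 3" using m03 by simp
  have m04: "B (E 1) (R 2) = 1" using matrix[of 0 4] by (simp add: seven_classes_def intersection_matrix_def)
  have n04: "B (E (Suc 0)) (R 2) = 1" using m04 by simp
  have m05: "B (E 1) (R 3) = 2" using matrix[of 0 5] by (simp add: seven_classes_def intersection_matrix_def)
  have n05: "B (E (Suc 0)) (R 3) = 2" using m05 by simp
  have m06: "B (E 1) (C1) = 2" using matrix[of 0 6] by (simp add: seven_classes_def intersection_matrix_def)
  have n06: "B (E (Suc 0)) (C1) = 2" using m06 by simp
  have m10: "B (E 2) (E 1) = 0" using matrix[of 1 0] by (simp add: seven_classes_def intersection_matrix_def)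
  have n10: "B (E 2) (E (Suc 0)) = 0" using m10 by simp
  have m11: "B (E 2) (E 2) = -3" using matrix[of 1 1] by (simp add: seven_classes_def intersection_matrix_def)
  have n11: "B (E 2) (E 2) = -3" using m11 by simp
  have m12: "B (E 2) (E 3) = 0" using matrix[of 1 2] by (simp add: seven_classes_def intersection_matrix_def)
  have n12: "B (E 2) (E 3) = 0" using m12 by simp
  have m13: "B (E 2) (R 1) = 2" using matrix[of 1 3] by (simp add: seven_classes_def intersection_matrix_def)
  have n13: "B (E 2) (R (Suc 0)) = 2" using m13 by simp
  have m14: "B (E 2) (R 2) = 1" using matrix[of 1 4] by (simp add: seven_classes_def intersection_matrix_def)
  have n14: "B (E 2) (R 2) = 1" using m14 by simp
  have m15: "B (E 2) (R 3) = 3" using matrix[of 1 5] by (simp add: seven_classes_def intersection_matrix_def)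
  have n15: "B (E 2) (R 3) = 3" using m15 by simp
  have m16: "B (E 2) (C1) = 0" using matrix[of 1 6] by (simp add: seven_classes_def intersection_matrix_def)
  have n16: "B (E 2) (C1) = 0" using m16 by simp
  have m20: "B (E 3) (E 1) = 0" using matrix[of 2 0] by (simp add: seven_classes_def intersection_matrix_def)
  have n20: "B (E 3) (E (Suc 0)) = 0" using m20 by simp
  have m21: "B (E 3) (E 2) = 0" using matrix[of 2 1] by (simp add: seven_classes_def intersection_matrix_def)
  have n21: "B (E 3) (E 2) = 0" using m21 by simp
  have m22: "B (E 3) (E 3) = -3" using matrix[of 2 2] by (simp add: seven_classes_def intersection_matrix_def)
  have n22: "B (E 3) (E 3) = -3" using m22 by simp
  have m23: "B (E 3) (R 1) = 1" using matrix[of 2 3] by (simp add: seven_classes_def intersection_matrix_def)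
  have n23: "B (E 3) (R (Suc 0)) = 1" using m23 by simp
  have m24: "B (E 3) (R 2) = 4" using matrix[of 2 4] by (simp add: seven_classes_def intersection_matrix_def)
  have n24: "B (E 3) (R 2) = 4" using m24 by simp
  have m25: "B (E 3) (R 3) = 1" using matrix[of 2 5] by (simp add: seven_classes_def intersection_matrix_def)
  have n25: "B (E 3) (R 3) = 1" using m25 by simp
  have m26: "B (E 3) (C1) = 1" using matrix[of 2 6] by (simp add: seven_classes_def intersection_matrix_def)
  have n26: "B (E 3) (C1) = 1" using m26 by simp
  have m30: "B (R 1) (E 1) = 3" using matrix[of 3 0] by (simp add: seven_classes_def intersection_matrix_def)
  have n30: "B (R (Suc 0)) (E (Suc 0)) = 3" using m30 by simp
  have m31: "B (R 1) (E 2) = 2" using matrix[of 3 1] by (simp add: seven_classes_def intersection_matrix_def)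
  have n31: "B (R (Suc 0)) (E 2) = 2" using m31 by simp
  have m32: "B (R 1) (E 3) = 1" using matrix[of 3 2] by (simp add: seven_classes_def intersection_matrix_def)
  have n32: "B (R (Suc 0)) (E 3) = 1" using m32 by simp
  have m33: "B (R 1) (R 1) = -3" using matrix[of 3 3] by (simp add: seven_classes_def intersection_matrix_def)
  have n33: "B (R (Suc 0)) (R (Suc 0)) = -3" using m33 by simp
  have m34: "B (R 1) (R 2) = 0" using matrix[of 3 4] by (simp add: seven_classes_def intersection_matrix_def)
  have n34: "B (R (Suc 0)) (R 2) = 0" using m34 by simp
  have m35: "B (R 1) (R 3) = 0" using matrix[of 3 5] by (simp add: seven_classes_def intersection_matrix_def)
  have n35: "B (R (Suc 0)) (R 3) = 0" using m35 by simp
  have m36: "B (R 1) (C1) = 0" using matrix[of 3 6] by (simp add: seven_classes_def intersection_matrix_def)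
  have n36: "B (R (Suc 0)) (C1) = 0" using m36 by simp
  have m40: "B (R 2) (E 1) = 1" using matrix[of 4 0] by (simp add: seven_classes_def intersection_matrix_def)
  have n40: "B (R 2) (E (Suc 0)) = 1" using m40 by simp
  have m41: "B (R 2) (E 2) = 1" using matrix[of 4 1] by (simp add: seven_classes_def intersection_matrix_def)
  have n41: "B (R 2) (E 2) = 1" using m41 by simp
  have m42: "B (R 2) (E 3) = 4" using matrix[of 4 2] by (simp add: seven_classes_def intersection_matrix_def)
  have n42: "B (R 2) (E 3) = 4" using m42 by simp
  have m43: "B (R 2) (R 1) = 0" using matrix[of 4 3] by (simp add: seven_classes_def intersection_matrix_def)
  have n43: "B (R 2) (R (Suc 0)) = 0" using m43 by simp
  have m44: "B (R 2) (R 2) = -3" using matrix[of 4 4] by (simp add: seven_classes_def intersection_matrix_def)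
  have n44: "B (R 2) (R 2) = -3" using m44 by simp
  have m45: "B (R 2) (R 3) = 0" using matrix[of 4 5] by (simp add: seven_classes_def intersection_matrix_def)
  have n45: "B (R 2) (R 3) = 0" using m45 by simp
  have m46: "B (R 2) (C1) = 1" using matrix[of 4 6] by (simp add: seven_classes_def intersection_matrix_def)
  have n46: "B (R 2) (C1) = 1" using m46 by simp
  have m50: "B (R 3) (E 1) = 2" using matrix[of 5 0] by (simp add: seven_classes_def intersection_matrix_def)
  have n50: "B (R 3) (E (Suc 0)) = 2" using m50 by simp
  have m51: "B (R 3) (E 2) = 3" using matrix[of 5 1] by (simp add: seven_classes_def intersection_matrix_def)
  have n51: "B (R 3) (E 2) = 3" using m51 by simp
  have m52: "B (R 3) (E 3) = 1" using matrix[of 5 2] by (simp add: seven_classes_def intersection_matrix_def)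
  have n52: "B (R 3) (E 3) = 1" using m52 by simp
  have m53: "B (R 3) (R 1) = 0" using matrix[of 5 3] by (simp add: seven_classes_def intersection_matrix_def)
  have n53: "B (R 3) (R (Suc 0)) = 0" using m53 by simp
  have m54: "B (R 3) (R 2) = 0" using matrix[of 5 4] by (simp add: seven_classes_def intersection_matrix_def)
  have n54: "B (R 3) (R 2) = 0" using m54 by simp
  have m55: "B (R 3) (R 3) = -3" using matrix[of 5 5] by (simp add: seven_classes_def intersection_matrix_def)
  have n55: "B (R 3) (R 3) = -3" using m55 by simp
  have m56: "B (R 3) (C1) = 2" using matrix[of 5 6] by (simp add: seven_classes_def intersection_matrix_def)
  have n56: "B (R 3) (C1) = 2" using m56 by simp
  have m60: "B (C1) (E 1) = 2" using matrix[of 6 0] by (simp add: seven_classes_def intersection_matrix_def)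
  have n60: "B (C1) (E (Suc 0)) = 2" using m60 by simp
  have m61: "B (C1) (E 2) = 0" using matrix[of 6 1] by (simp add: seven_classes_def intersection_matrix_def)
  have n61: "B (C1) (E 2) = 0" using m61 by simp
  have m62: "B (C1) (E 3) = 1" using matrix[of 6 2] by (simp add: seven_classes_def intersection_matrix_def)
  have n62: "B (C1) (E 3) = 1" using m62 by simp
  have m63: "B (C1) (R 1) = 0" using matrix[of 6 3] by (simp add: seven_classes_def intersection_matrix_def)
  have n63: "B (C1) (R (Suc 0)) = 0" using m63 by simp
  have m64: "B (C1) (R 2) = 1" using matrix[of 6 4] by (simp add: seven_classes_def intersection_matrix_def)
  have n64: "B (C1) (R 2) = 1" using m64 by simp
  have m65: "B (C1) (R 3) = 2" using matrix[of 6 5] by (simp add: seven_classes_def intersection_matrix_def)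
  have n65: "B (C1) (R 3) = 2" using m65 by simp
  have m66: "B (C1) (C1) = -2" using matrix[of 6 6] by (simp add: seven_classes_def intersection_matrix_def)
  have n66: "B (C1) (C1) = -2" using m66 by simp
  obtain \<sigma> where sp: "\<sigma> permutes {1..6::nat}" and
     sg: "\<forall>i\<in>{1..6}. \<sigma> (\<sigma> i) = i \<and> \<sigma> i \<noteq> i \<and>
          ((\<alpha> (Rc i 1) = Rc (\<sigma> i) 1 \<and> \<alpha> (Rc i 2) = Rc (\<sigma> i) 2) \<or>
           (\<alpha> (Rc i 1) = Rc (\<sigma> i) 2 \<and> \<alpha> (Rc i 2) = Rc (\<sigma> i) 1))"
    using \<alpha>_A2 by blast
  define x where "x = \<alpha> C1"
  define t where "t = B x C1"
  have xRc: "B x (Rc l m) = 0" if l: "l \<in> {1..6}" and m: "m \<in> {1,2}" for l m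
  proof -
    have sl: "\<sigma> l \<in> {1..6}" using permutes_in_image[OF sp] l by blast
    have "\<alpha> (Rc l m) \<in> {Rc (\<sigma> l) 1, Rc (\<sigma> l) 2}" using sg l m by auto
    then obtain m' where m': "m' \<in> {1,2}" "\<alpha> (Rc l m) = Rc (\<sigma> l) m'" by auto
    have "B x (Rc l m) = B (\<alpha> x) (\<alpha> (Rc l m))" using \<alpha>_isom by simp
    also have "\<dots> = B C1 (Rc (\<sigma> l) m')" using m' \<alpha>_invol by (simp add: x_def)
    also have "\<dots> = 0" using A2_orth_C[OF sl m'(1)] sym by simp
    finally show ?thesis .
  qed
  have x1: "B x (E 1) = 2" using \<alpha>_isom[of C1 "R 3"] \<alpha>_R3 m56 sym by (simp add: x_def)
  have x3: "B x (E 3) = 1" using \<alpha>_isom[of C1 "R 2"] \<alpha>_R2 m46 sym by (simp add: x_def)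
  have xr1: "B x (R 1) = 0" using \<alpha>_isom[of C1 "E 2"] \<alpha>_E2 m16 sym by (simp add: x_def)
  have xr2: "B x (R 2) = 1" using \<alpha>_isom[of C1 "E 3"] \<alpha>_E3 m26 sym by (simp add: x_def)
  have xr3: "B x (R 3) = 2" using \<alpha>_isom[of C1 "E 1"] \<alpha>_E1 m06 sym by (simp add: x_def)
  have x1': "B x (E (Suc 0)) = 2" using x1 by simp
  have xr1': "B x (R (Suc 0)) = 0" using xr1 by simp
  define y where "y = (-1/3 - t/6) *\<^sub>R E 1 + (1 + t/2) *\<^sub>R E 3 + (1 + t/2) *\<^sub>R R 2
      + (-1/3 - t/6) *\<^sub>R R 3 + (1/3 - t/3) *\<^sub>R C1"
  have yRc: "B y (Rc l m) = 0" if l: "l \<in> {1..6}" and m: "m \<in> {1,2}" for l m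
    using A2_orth[OF l m, of 1] A2_orth[OF l m, of 3] A2_orth[OF l m, of 2] A2_orth_C[OF l m] sym
    by (simp add: y_def bsimps)
  define z where "z = x - y"
  have zgen: "B z v = 0" if "v \<in> {E 1, E 3, R 1, R 2, R 3, C1} \<union> {Rc i j | i j. i \<in> {1..6} \<and> j \<in> {1,2}}" for v
    using that
  proof
    assume "v \<in> {E 1, E 3, R 1, R 2, R 3, C1}"
    then show ?thesis
      by (auto simp: x1' xr1' x1 x3 xr1 xr2 xr3 z_def y_def t_def bsimps m00 m02 m03 m04 m05 m06 m20 m22 m23 m24 m25 m26
        m30 m32 m33 m34 m35 m36 m40 m42 m43 m44 m45 m46 m50 m52 m53 m54 m55 m56 m60 m62 m63 m64 m65 m66 n00 n01 n02 n03 n04 n05 n06 n10 n11 n12 n13 n14 n15 n16 n20 n21 n22 n23 n24 n25 n26 n30 n31 n32 n33 n34 n35 n36 n40 n41 n42 n43 n44 n45 n46 n50 n51 n52 n53 n54 n55 n56 n60 n61 n62 n63 n64 n65 n66 algebra_simps)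
  next
    assume "v \<in> {Rc i j | i j. i \<in> {1..6} \<and> j \<in> {1,2}}"
    then show ?thesis using xRc yRc by (auto simp: z_def bsimps)
  qed
  have "B z v = 0" for v
  proof -
    have "v \<in> span ({E 1, E 3, R 1, R 2, R 3, C1} \<union> {Rc i j | i j. i \<in> {1..6} \<and> j \<in> {1,2}})"
      unfolding spans by simp
    then show ?thesis by (rule linear_eq_0_on_span[OF bl zgen, rotated])
  qed
  then have "z = 0" using nondeg by blast
  then have xy: "x = y" by (simp add: z_def)
  have "B x x = -2" using m66 \<alpha>_isom by (simp add: x_def)
  also have "B x x = B x y" using xy by simp
  also have "B x y = 2/3 + 2*t/3 - t^2/3"
    using x1 x3 xr1 xr2 xr3 by (simp add: y_def bsimps t_def power2_eq_square algebra_simps)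
  finally have "(t - 4) * (t + 2) = 0" by (simp add: algebra_simps power2_eq_square)
  then have "t = 4 \<or> t = -2" by auto
  then show ?thesis
  proof
    assume "t = 4"
    then have "y = - R 3 - E 1 + 3 *\<^sub>R (E 3 + R 2) - C1" by (simp add: y_def algebra_simps)
    then show ?thesis using xy x_def by simp
  next
    assume "t = -2"
    then have "y = C1" by (simp add: y_def algebra_simps)
    then show ?thesis using xy x_def by simp
  qed
qed

end
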